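(* Let $h>0$, let $B\subset\mathbb Z^8_h$ be bounded and let $f:\overline B\to\mathbb O$. Then: (i) $D^h\big(C^h_{\partial B}f\big)(y)=0$ for every $y\in B^\circ\cup(\mathbb Z^8_h\setminus B)^\circ$; (ii) if $f(y)=C^h_{\partial B}f(y)$ for every $y\in B$, then $D^hf(y)=0$ for every $y\in B^\circ$.
   Context: $\mathbb O$ is the real octonion algebra with basis $\mathbf e_0=1,\mathbf e_1,\dots,\mathbf e_7$, where $\mathbf e_i\mathbf e_j=-\delta_{ij}+\sum_k\varepsilon_{ijk}\mathbf e_k$ for $1\le i,j\le 7$, $\varepsilon_{ijk}$ totally antisymmetric with $\varepsilon_{ijk}=1$ for $ijk\in\{123,145,176,246,257,347,365\}$; $\overline{\mathbf e}_0=\mathbf e_0$, $\overline{\mathbf e}_l=-\mathbf e_l$ ($l\ge1$). For $h>0$, $\mathbb Z^8_h=(h\mathbb Z)^8$, $e_0,\dots,e_7$ are the standard unit vectors of $\mathbb R^8$, $\chi_A$ is the indicator of $A$. Difference operators: $\partial_l^{+,h}f(x)=(f(x+he_l)-f(x))/h$, $\partial_l^{-,h}f(x)=(f(x)-f(x-he_l))/h$, $\partial_l^h=\frac12(\partial_l^{+,h}+\partial_l^{-,h})$, $D^hf=\sum_{l=0}^7\mathbf e_l\partial_l^hf$. $N(x)=\{x,x\pm he_0,\dots,x\pm he_7\}$; for $A\subset\mathbb Z^8_h$: $\partial A=\{x:\ N(x)\cap A\neq\emptyset,\ N(x)\cap(\mathbb Z^8_h\setminus A)\neq\emptyset\}$,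 $\overline A=A\cup\partial A$, $A^\circ=A\setminus\partial A$. For $x\in\partial B$: $\Sigma(x)=\sum_l[(\partial_l^{+,h}\chi_B(x))^2+(\partial_l^{-,h}\chi_B(x))^2]$, $s(x)=\frac{h^8}{2}\sqrt{\Sigma(x)}$, $n_l^\pm(x)=-2\partial_l^{\pm,h}\chi_B(x)/\sqrt{\Sigma(x)}$, $\int_{\partial B}g\,dS=\sum_{x\in\partial B}g(x)s(x)$. Fundamental solution: $E^1(x)=\frac{1}{(2\pi)^8}\int_{[-\pi,\pi]^8}\frac{\sum_l\overline{\mathbf e}_l\sin u_l}{\sum_l\sin^2u_l}\sin(\sum_lu_lx_l)\,du$ ($x\in\mathbb Z^8$), $E^h(x)=h^{-7}E^1(x/h)$. Star product: $K^h(x,y)*g(x)=-\frac12\sum_{l=0}^7\big(E^h(he_l-x+y)n_l^-(x)+E^h(-he_l-x+y)n_l^+(x)\big)(\mathbf e_lg(x))$ for $x\in\partial B$, $y\in\mathbb Z^8_h$. Discrete Cauchy-Bitsadze operator: $C^h_{\partial B}g(y)=\int_{\partial B}K^h(x,y)*g(x)\,dS(x)$ for $y\in\mathbb Z^8_h$ and $g:\partial B\to\mathbb O$. *)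

theory Defs
  imports "HOL-Analysis.Analysis"
begin

text \<open>Points of R^8 and octonions are both represented as real^8.
  The coordinate / basis index l (0..7) corresponds to ix l.\<close>

type_synonym pt = "real ^ 8"
type_synonym oct = "real ^ 8"

definition ix :: "nat \<Rightarrow> 8" where "ix l = of_nat l"

definition ev :: "nat \<Rightarrow> real ^ 8" where "ev l = axis (ix l) 1"

definition octT :: "(nat \<times> nat \<times> nat) set" where
  "octT = {(1,2,3),(1,4,5),(1,7,6),(2,4,6),(2,5,7),(3,4,7),(3,6,5)}"

definition eps :: "nat \<Rightarrow> nat \<Rightarrow> nat \<Rightarrow> real" where
  "eps i j k =
     (if (i,j,k) \<in> octT \<or> (j,k,i) \<in> octT \<or> (k,i,j) \<in> octT then 1
      else if (j,i,k) \<in> octT \<or> (i,k,j) \<in> octT \<or> (k,j,i) \<in> octT then -1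
      else 0)"

definition bmul :: "nat \<Rightarrow> nat \<Rightarrow> oct" where
  "bmul i j =
     (if i = 0 then ev j
      else if j = 0 then ev i
      else (if i = j then - ev 0 else 0) + (\<Sum>k\<in>{1..7}. eps i j k *\<^sub>R ev k))"

definition omul :: "oct \<Rightarrow> oct \<Rightarrow> oct" where
  "omul a b = (\<Sum>i<8. \<Sum>j<8. (a $ ix i * b $ ix j) *\<^sub>R bmul i j)"

definition Zh :: "real \<Rightarrow> pt set" where
  "Zh h = {x. \<forall>i. \<exists>k::int. x $ i = h * of_int k}"

definition dplus :: "nat \<Rightarrow> real \<Rightarrow> (pt \<Rightarrow> 'a::real_vector) \<Rightarrow> pt \<Rightarrow> 'a" where
  "dplus l h f x = (1 / h) *\<^sub>R (f (x + h *\<^sub>R ev l) - f x)"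

definition dminus :: "nat \<Rightarrow> real \<Rightarrow> (pt \<Rightarrow> 'a::real_vector) \<Rightarrow> pt \<Rightarrow> 'a" where
  "dminus l h f x = (1 / h) *\<^sub>R (f x - f (x - h *\<^sub>R ev l))"

definition dcent :: "nat \<Rightarrow> real \<Rightarrow> (pt \<Rightarrow> 'a::real_vector) \<Rightarrow> pt \<Rightarrow> 'a" where
  "dcent l h f x = (1 / 2) *\<^sub>R (dplus l h f x + dminus l h f x)"

definition Dh :: "real \<Rightarrow> (pt \<Rightarrow> oct) \<Rightarrow> pt \<Rightarrow> oct" where
  "Dh h f x = (\<Sum>l<8. omul (ev l) (dcent l h f x))"

definition nbhd :: "real \<Rightarrow> pt \<Rightarrow> pt set" where
  "nbhd h x = insert x ({x + h *\<^sub>R ev l | l. l < 8} \<union> {x - h *\<^sub>R ev l | l. l < 8})"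

definition bdry :: "real \<Rightarrow> pt set \<Rightarrow> pt set" where
  "bdry h A = {x \<in> Zh h. nbhd h x \<inter> A \<noteq> {} \<and> nbhd h x \<inter> (Zh h - A) \<noteq> {}}"

definition interior_h :: "real \<Rightarrow> pt set \<Rightarrow> pt set" where
  "interior_h h A = A - bdry h A"

definition Sig :: "real \<Rightarrow> pt set \<Rightarrow> pt \<Rightarrow> real" where
  "Sig h B x = (\<Sum>l<8. (dplus l h (indicator B) x)\<^sup>2 + (dminus l h (indicator B) x)\<^sup>2)"

definition sarea :: "real \<Rightarrow> pt set \<Rightarrow> pt \<Rightarrow> real" where
  "sarea h B x = h ^ 8 / 2 * sqrt (Sig h B x)"

definition nplus :: "real \<Rightarrow> pt set \<Rightarrow> nat \<Rightarrow> pt \<Rightarrow> real" where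
  "nplus h B l x = - 2 * dplus l h (indicator B) x / sqrt (Sig h B x)"

definition nminus :: "real \<Rightarrow> pt set \<Rightarrow> nat \<Rightarrow> pt \<Rightarrow> real" where
  "nminus h B l x = - 2 * dminus l h (indicator B) x / sqrt (Sig h B x)"

definition ebar :: "nat \<Rightarrow> oct" where
  "ebar l = (if l = 0 then ev 0 else - ev l)"

definition E1 :: "pt \<Rightarrow> oct" where
  "E1 x = (1 / (2 * pi) ^ 8) *\<^sub>R
     integral (cbox (\<chi> i. - pi) (\<chi> i. pi))
       (\<lambda>u::real^8. (sin (u \<bullet> x) / (\<Sum>l<8. (sin (u $ ix l))\<^sup>2)) *\<^sub>R
                      (\<Sum>l<8. sin (u $ ix l) *\<^sub>R ebar l))"

definition Eh :: "real \<Rightarrow> pt \<Rightarrow> oct" where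
  "Eh h x = (1 / h ^ 7) *\<^sub>R E1 ((1 / h) *\<^sub>R x)"

definition Kstar :: "real \<Rightarrow> pt set \<Rightarrow> pt \<Rightarrow> pt \<Rightarrow> (pt \<Rightarrow> oct) \<Rightarrow> oct" where
  "Kstar h B x y g = (- 1 / 2) *\<^sub>R (\<Sum>l<8.
      omul (nminus h B l x *\<^sub>R Eh h (h *\<^sub>R ev l - x + y)
            + nplus h B l x *\<^sub>R Eh h (- (h *\<^sub>R ev l) - x + y))
           (omul (ev l) (g x)))"

definition Ch :: "real \<Rightarrow> pt set \<Rightarrow> (pt \<Rightarrow> oct) \<Rightarrow> pt \<Rightarrow> oct" where
  "Ch h B g y = (\<Sum>x\<in>bdry h B. sarea h B x *\<^sub>R Kstar h B x y g)"

end

theory Submission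
  imports Defs "HOL-Analysis.Analysis"
begin

lemma ix_inj: "i < 8 \<Longrightarrow> j < 8 \<Longrightarrow> ix i = ix j \<longleftrightarrow> i = j"
  unfolding ix_def
  apply (simp add: less_Suc_eq numeral_eq_Suc)
  apply (elim disjE; simp)
  done
lemma ev_comp: "l < 8 \<Longrightarrow> m < 8 \<Longrightarrow> ev l $ ix m = (if l = m then 1 else 0)"
  unfolding ev_def using ix_inj[of m l] by (auto simp: axis_def)
lemma sum8: "(\<Sum>i<8::nat. f i) = f 0 + f 1 + f 2 + f 3 + f 4 + f 5 + f 6 + (f 7::'a::comm_monoid_add)"
  by (simp add: numeral_eq_Suc add.assoc)
lemma sum17: "(\<Sum>i\<in>{1..7::nat}. f i) = f 1 + f 2 + f 3 + f 4 + f 5 + f 6 + (f 7::'a::comm_monoid_add)"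
  by (simp add: numeral_eq_Suc atLeastAtMostSuc_conv ac_simps)
lemma ix_surj: "\<exists>m<8. i = ix m"
proof (cases i rule: bit0_cases)
  case (of_int z)
  then show ?thesis by (intro exI[of _ "nat z"]) (auto simp: ix_def)
qed
lemma UNIV8: "(UNIV::8 set) = ix ` {..<8}"
  using ix_surj by auto
lemma vec8_eqI: "(\<And>m. m < 8 \<Longrightarrow> (x::real^8) $ ix m = y $ ix m) \<Longrightarrow> x = y"
  by (metis ix_surj vec_eq_iff)
lemma sum_ev_comp: "m < 8 \<Longrightarrow> (\<Sum>k<8. a k *\<^sub>R ev k) $ ix m = a m"
  by (simp add: sum_component ev_comp if_distrib cong: if_cong) 
lemma sum_ebar_comp: "m < 8 \<Longrightarrow> (\<Sum>k<8. a k *\<^sub>R ebar k) $ ix m = (if m = 0 then a 0 else - a m)"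
  unfolding ebar_def by (auto simp: sum_component ev_comp if_distrib sum8 cong: if_cong)
lemma omul_c0: "omul a b $ ix 0 = a$ix 0*b$ix 0 - a$ix 1*b$ix 1 - a$ix 2*b$ix 2 - a$ix 3*b$ix 3 - a$ix 4*b$ix 4 - a$ix 5*b$ix 5 - a$ix 6*b$ix 6 - a$ix 7*b$ix 7"
  unfolding omul_def sum8 bmul_def sum17 by (simp add: ev_comp eps_def octT_def)

lemma omul_c1: "omul a b $ ix 1 = a$ix 0*b$ix 1 + a$ix 1*b$ix 0 + a$ix 2*b$ix 3 - a$ix 3*b$ix 2 + a$ix 4*b$ix 5 - a$ix 5*b$ix 4 - a$ix 6*b$ix 7 + a$ix 7*b$ix 6"
  unfolding omul_def sum8 bmul_def sum17 by (simp add: ev_comp eps_def octT_def)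

lemma omul_c2: "omul a b $ ix 2 = a$ix 0*b$ix 2 - a$ix 1*b$ix 3 + a$ix 2*b$ix 0 + a$ix 3*b$ix 1 + a$ix 4*b$ix 6 + a$ix 5*b$ix 7 - a$ix 6*b$ix 4 - a$ix 7*b$ix 5"
  unfolding omul_def sum8 bmul_def sum17 by (simp add: ev_comp eps_def octT_def)

lemma omul_c3: "omul a b $ ix 3 = a$ix 0*b$ix 3 + a$ix 1*b$ix 2 - a$ix 2*b$ix 1 + a$ix 3*b$ix 0 + a$ix 4*b$ix 7 - a$ix 5*b$ix 6 + a$ix 6*b$ix 5 - a$ix 7*b$ix 4"
  unfolding omul_def sum8 bmul_def sum17 by (simp add: ev_comp eps_def octT_def)

lemma omul_c4: "omul a b $ ix 4 = a$ix 0*b$ix 4 - a$ix 1*b$ix 5 - a$ix 2*b$ix 6 - a$ix 3*b$ix 7 + a$ix 4*b$ix 0 + a$ix 5*b$ix 1 + a$ix 6*b$ix 2 + a$ix 7*b$ix 3"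
  unfolding omul_def sum8 bmul_def sum17 by (simp add: ev_comp eps_def octT_def)

lemma omul_c5: "omul a b $ ix 5 = a$ix 0*b$ix 5 + a$ix 1*b$ix 4 - a$ix 2*b$ix 7 + a$ix 3*b$ix 6 - a$ix 4*b$ix 1 + a$ix 5*b$ix 0 - a$ix 6*b$ix 3 + a$ix 7*b$ix 2"
  unfolding omul_def sum8 bmul_def sum17 by (simp add: ev_comp eps_def octT_def)

lemma omul_c6: "omul a b $ ix 6 = a$ix 0*b$ix 6 + a$ix 1*b$ix 7 + a$ix 2*b$ix 4 - a$ix 3*b$ix 5 - a$ix 4*b$ix 2 + a$ix 5*b$ix 3 + a$ix 6*b$ix 0 - a$ix 7*b$ix 1"
  unfolding omul_def sum8 bmul_def sum17 by (simp add: ev_comp eps_def octT_def)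

lemma omul_c7: "omul a b $ ix 7 = a$ix 0*b$ix 7 - a$ix 1*b$ix 6 + a$ix 2*b$ix 5 + a$ix 3*b$ix 4 - a$ix 4*b$ix 3 - a$ix 5*b$ix 2 + a$ix 6*b$ix 1 + a$ix 7*b$ix 0"
  unfolding omul_def sum8 bmul_def sum17 by (simp add: ev_comp eps_def octT_def)

lemma sev0: "(\<Sum>k<8. a k *\<^sub>R ev k) $ ix 0 = a 0" by (rule sum_ev_comp) simp
lemma seb0: "(\<Sum>k<8. a k *\<^sub>R ebar k) $ ix 0 = a 0" by (subst sum_ebar_comp) simp_all
lemma sev1: "(\<Sum>k<8. a k *\<^sub>R ev k) $ ix 1 = a 1" by (rule sum_ev_comp) simp
lemma seb1: "(\<Sum>k<8. a k *\<^sub>R ebar k) $ ix 1 = - a 1" by (subst sum_ebar_comp) simp_all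
lemma sev2: "(\<Sum>k<8. a k *\<^sub>R ev k) $ ix 2 = a 2" by (rule sum_ev_comp) simp
lemma seb2: "(\<Sum>k<8. a k *\<^sub>R ebar k) $ ix 2 = - a 2" by (subst sum_ebar_comp) simp_all
lemma sev3: "(\<Sum>k<8. a k *\<^sub>R ev k) $ ix 3 = a 3" by (rule sum_ev_comp) simp
lemma seb3: "(\<Sum>k<8. a k *\<^sub>R ebar k) $ ix 3 = - a 3" by (subst sum_ebar_comp) simp_all
lemma sev4: "(\<Sum>k<8. a k *\<^sub>R ev k) $ ix 4 = a 4" by (rule sum_ev_comp) simp
lemma seb4: "(\<Sum>k<8. a k *\<^sub>R ebar k) $ ix 4 = - a 4" by (subst sum_ebar_comp) simp_all
lemma sev5: "(\<Sum>k<8. a k *\<^sub>R ev k) $ ix 5 = a 5" by (rule sum_ev_comp) simp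
lemma seb5: "(\<Sum>k<8. a k *\<^sub>R ebar k) $ ix 5 = - a 5" by (subst sum_ebar_comp) simp_all
lemma sev6: "(\<Sum>k<8. a k *\<^sub>R ev k) $ ix 6 = a 6" by (rule sum_ev_comp) simp
lemma seb6: "(\<Sum>k<8. a k *\<^sub>R ebar k) $ ix 6 = - a 6" by (subst sum_ebar_comp) simp_all
lemma sev7: "(\<Sum>k<8. a k *\<^sub>R ev k) $ ix 7 = a 7" by (rule sum_ev_comp) simp
lemma seb7: "(\<Sum>k<8. a k *\<^sub>R ebar k) $ ix 7 = - a 7" by (subst sum_ebar_comp) simp_all
lemma key_c0: "omul (\<Sum>k<8. a k *\<^sub>R ev k) (omul (\<Sum>l<8. a l *\<^sub>R ebar l) w) $ ix 0 = ((\<Sum>l<8. (a l)\<^sup>2) *\<^sub>R w) $ ix 0"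
  apply (simp only: omul_c0 omul_c0 omul_c1 omul_c2 omul_c3 omul_c4 omul_c5 omul_c6 omul_c7 vector_scaleR_component sev0 seb0 sev1 seb1 sev2 seb2 sev3 seb3 sev4 seb4 sev5 seb5 sev6 seb6 sev7 seb7)
  apply (simp only: sum8 real_scaleR_def)
  by algebra
lemma key_c1: "omul (\<Sum>k<8. a k *\<^sub>R ev k) (omul (\<Sum>l<8. a l *\<^sub>R ebar l) w) $ ix 1 = ((\<Sum>l<8. (a l)\<^sup>2) *\<^sub>R w) $ ix 1"
  apply (simp only: omul_c1 omul_c0 omul_c1 omul_c2 omul_c3 omul_c4 omul_c5 omul_c6 omul_c7 vector_scaleR_component sev0 seb0 sev1 seb1 sev2 seb2 sev3 seb3 sev4 seb4 sev5 seb5 sev6 seb6 sev7 seb7)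
  apply (simp only: sum8 real_scaleR_def)
  by algebra
lemma key_c2: "omul (\<Sum>k<8. a k *\<^sub>R ev k) (omul (\<Sum>l<8. a l *\<^sub>R ebar l) w) $ ix 2 = ((\<Sum>l<8. (a l)\<^sup>2) *\<^sub>R w) $ ix 2"
  apply (simp only: omul_c2 omul_c0 omul_c1 omul_c2 omul_c3 omul_c4 omul_c5 omul_c6 omul_c7 vector_scaleR_component sev0 seb0 sev1 seb1 sev2 seb2 sev3 seb3 sev4 seb4 sev5 seb5 sev6 seb6 sev7 seb7)
  apply (simp only: sum8 real_scaleR_def)
  by algebra
lemma key_c3: "omul (\<Sum>k<8. a k *\<^sub>R ev k) (omul (\<Sum>l<8. a l *\<^sub>R ebar l) w) $ ix 3 = ((\<Sum>l<8. (a l)\<^sup>2) *\<^sub>R w) $ ix 3"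
  apply (simp only: omul_c3 omul_c0 omul_c1 omul_c2 omul_c3 omul_c4 omul_c5 omul_c6 omul_c7 vector_scaleR_component sev0 seb0 sev1 seb1 sev2 seb2 sev3 seb3 sev4 seb4 sev5 seb5 sev6 seb6 sev7 seb7)
  apply (simp only: sum8 real_scaleR_def)
  by algebra
lemma key_c4: "omul (\<Sum>k<8. a k *\<^sub>R ev k) (omul (\<Sum>l<8. a l *\<^sub>R ebar l) w) $ ix 4 = ((\<Sum>l<8. (a l)\<^sup>2) *\<^sub>R w) $ ix 4"
  apply (simp only: omul_c4 omul_c0 omul_c1 omul_c2 omul_c3 omul_c4 omul_c5 omul_c6 omul_c7 vector_scaleR_component sev0 seb0 sev1 seb1 sev2 seb2 sev3 seb3 sev4 seb4 sev5 seb5 sev6 seb6 sev7 seb7)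
  apply (simp only: sum8 real_scaleR_def)
  by algebra
lemma key_c5: "omul (\<Sum>k<8. a k *\<^sub>R ev k) (omul (\<Sum>l<8. a l *\<^sub>R ebar l) w) $ ix 5 = ((\<Sum>l<8. (a l)\<^sup>2) *\<^sub>R w) $ ix 5"
  apply (simp only: omul_c5 omul_c0 omul_c1 omul_c2 omul_c3 omul_c4 omul_c5 omul_c6 omul_c7 vector_scaleR_component sev0 seb0 sev1 seb1 sev2 seb2 sev3 seb3 sev4 seb4 sev5 seb5 sev6 seb6 sev7 seb7)
  apply (simp only: sum8 real_scaleR_def)
  by algebra
lemma key_c6: "omul (\<Sum>k<8. a k *\<^sub>R ev k) (omul (\<Sum>l<8. a l *\<^sub>R ebar l) w) $ ix 6 = ((\<Sum>l<8. (a l)\<^sup>2) *\<^sub>R w) $ ix 6"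
  apply (simp only: omul_c6 omul_c0 omul_c1 omul_c2 omul_c3 omul_c4 omul_c5 omul_c6 omul_c7 vector_scaleR_component sev0 seb0 sev1 seb1 sev2 seb2 sev3 seb3 sev4 seb4 sev5 seb5 sev6 seb6 sev7 seb7)
  apply (simp only: sum8 real_scaleR_def)
  by algebra
lemma key_c7: "omul (\<Sum>k<8. a k *\<^sub>R ev k) (omul (\<Sum>l<8. a l *\<^sub>R ebar l) w) $ ix 7 = ((\<Sum>l<8. (a l)\<^sup>2) *\<^sub>R w) $ ix 7"
  apply (simp only: omul_c7 omul_c0 omul_c1 omul_c2 omul_c3 omul_c4 omul_c5 omul_c6 omul_c7 vector_scaleR_component sev0 seb0 sev1 seb1 sev2 seb2 sev3 seb3 sev4 seb4 sev5 seb5 sev6 seb6 sev7 seb7)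
  apply (simp only: sum8 real_scaleR_def)
  by algebra
lemma key_oct: "omul (\<Sum>k<8. a k *\<^sub>R ev k) (omul (\<Sum>l<8. a l *\<^sub>R ebar l) w) = (\<Sum>l<8. (a l)\<^sup>2) *\<^sub>R w"
proof (rule vec8_eqI)
  fix m :: nat assume "m < 8"
  then have "m=0 \<or> m=1 \<or> m=2 \<or> m=3 \<or> m=4 \<or> m=5 \<or> m=6 \<or> m=7" by linarith
  then show "omul (\<Sum>k<8. a k *\<^sub>R ev k) (omul (\<Sum>l<8. a l *\<^sub>R ebar l) w) $ ix m = ((\<Sum>l<8. (a l)\<^sup>2) *\<^sub>R w) $ ix m"
    using key_c0 key_c1 key_c2 key_c3 key_c4 key_c5 key_c6 key_c7 by blast
qed


lemma cos_lb: fixes x :: real assumes "0 \<le> x" shows "1 - x\<^sup>2/2 \<le> cos x"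
proof -
  define f where "f = (\<lambda>t::real. cos t - 1 + t\<^sup>2/2)"
  have "f 0 \<le> f x"
  proof (rule DERIV_nonneg_imp_nondecreasing[of 0 x f])
    show "0 \<le> x" by fact
    fix t :: real assume "0 \<le> t" "t \<le> x"
    then show "\<exists>y. (f has_real_derivative y) (at t) \<and> 0 \<le> y"
      unfolding f_def by (intro exI[of _ "- sin t + t"] conjI) (auto intro!: derivative_eq_intros simp: sin_x_le_x)
  qed
  then show ?thesis by (simp add: f_def)
qed

lemma sin_lb: fixes x :: real assumes "0 \<le> x" shows "x - x^3/6 \<le> sin x"
proof -
  define f where "f = (\<lambda>t::real. sin t - t + t^3/6)"
  have "f 0 \<le> f x"
  proof (rule DERIV_nonneg_imp_nondecreasing[of 0 x f])
    show "0 \<le> x" by fact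
    fix t :: real assume "0 \<le> t" "t \<le> x"
    then show "\<exists>y. (f has_real_derivative y) (at t) \<and> 0 \<le> y"
      using cos_lb[of t] unfolding f_def
      by (intro exI[of _ "cos t - 1 + t\<^sup>2/2"] conjI) (auto intro!: derivative_eq_intros simp: power2_eq_square power3_eq_cube)
  qed
  then show ?thesis by (simp add: f_def)
qed

lemma sin_lb4: fixes t :: real assumes "0 \<le> t" "t \<le> pi/2" shows "t/4 \<le> sin t"
proof -
  have "t < 2" using assms pi_less_4 by linarith
  then have "t*t \<le> 2*2" using assms by (intro mult_mono) auto
  then have "t*(t*t) \<le> t*4" using assms by (intro mult_left_mono) auto
  then have "t^3/6 \<le> 3*t/4" using assms by (simp add: power3_eq_cube)
  then show ?thesis using sin_lb[OF assms(1)] by linarith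
qed

definition pw :: "real \<Rightarrow> real" where "pw t = (\<bar>t\<bar>/4) powr (-1/8)"
definition psi :: "real \<Rightarrow> real" where "psi t = pw t + pw (t - pi) + pw (t + pi)"

lemma pw_nonneg: "0 \<le> pw t" by (simp add: pw_def)

lemma abs_sin_bound: assumes "\<bar>t\<bar> \<le> pi" "sin t \<noteq> 0" shows "\<bar>sin t\<bar> powr (-1/8) \<le> psi t"
proof -
  define a where "a = \<bar>t\<bar>"
  have sa: "\<bar>sin t\<bar> = sin a"
  proof (cases "t \<ge> 0")
    case False
    then have "0 \<le> sin (-t)" using assms by (intro sin_ge_zero) auto
    then show ?thesis using False by (simp add: a_def)
  next
    case True
    then have "0 \<le> sin t" using assms by (intro sin_ge_zero) auto
    then show ?thesis using True by (simp add: a_def)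
  qed
  have "a \<noteq> 0" using sa assms(2) by auto
  then have a0: "0 < a" by (simp add: a_def)
  have "a \<noteq> pi" using sa assms(2) by auto
  moreover have "a \<le> pi" using assms(1) by (simp add: a_def)
  ultimately have api: "a < pi" by linarith
  obtain m where m: "0 < m" "m/4 \<le> \<bar>sin t\<bar>" "m = a \<or> m = pi - a"
  proof (cases "a \<le> pi/2")
    case True
    have "a/4 \<le> sin a" using sin_lb4[of a] a0 True by linarith
    then show ?thesis using that[of a] a0 sa by simp
  next
    case False
    have "(pi - a)/4 \<le> sin (pi - a)" using sin_lb4[of "pi - a"] False api by linarith
    then have "(pi - a)/4 \<le> \<bar>sin t\<bar>" using sa by simp
    then show ?thesis using that[of "pi - a"] api by simp
  qed
  have "\<bar>sin t\<bar> powr (-1/8) \<le> (m/4) powr (-1/8)"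
    by (rule powr_mono2') (use m in auto)
  also have "(m/4) powr (-1/8) \<le> pw t + pw (t - pi) + pw (t + pi)"
  proof -
    have "m = \<bar>t\<bar> \<or> m = \<bar>t - pi\<bar> \<or> m = \<bar>t + pi\<bar>"
      using m(3) assms(1) unfolding a_def by (cases "t \<ge> 0") (auto simp: abs_if)
    then have "(m/4) powr (-1/8) = pw t \<or> (m/4) powr (-1/8) = pw (t - pi) \<or> (m/4) powr (-1/8) = pw (t + pi)"
      unfolding pw_def by blast
    then show ?thesis using pw_nonneg[of t] pw_nonneg[of "t-pi"] pw_nonneg[of "t+pi"] by linarith
  qed
  finally show ?thesis by (simp add: psi_def)
qed

lemma pw_int0: assumes "0 \<le> R" shows "pw integrable_on {-R..R}"
proof -
  have i0: "(\<lambda>x. x powr (-1/8)) integrable_on {0..R}"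
    using integrable_on_powr_from_0[of "-1/8" R] assms by simp
  have i0': "(\<lambda>x. x powr (-1/8) * (1 / 4 powr (-1/8))) integrable_on {0..R}"
    by (rule integrable_on_mult_left[OF i0])
  have eq: "x powr (-1/8) * (1 / 4 powr (-1/8)) = pw x" if "x \<in> {0..R}" for x
  proof -
    have "pw x = (x/4) powr (-1/8)" using that by (simp add: pw_def)
    also have "\<dots> = x powr (-1/8) / 4 powr (-1/8)" by (rule powr_divide)
    finally show ?thesis by simp
  qed
  have i1: "pw integrable_on {0..R}"
    by (rule integrable_eq[OF i0' eq])
  have "(\<lambda>x. pw (-x)) integrable_on {-R..-0}"
    using i1 Henstock_Kurzweil_Integration.integrable_reflect_real[where f=pw and a=0 and b=R] by simp
  then have i2: "pw integrable_on {-R..0}" by (simp add: pw_def[abs_def])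
  show ?thesis by (rule Henstock_Kurzweil_Integration.integrable_combine[OF _ _ i2 i1]) (use assms in auto)
qed

lemma pw_int: assumes "\<bar>a\<bar> \<le> pi" shows "(\<lambda>t. pw (t - a)) integrable_on {-pi..pi}"
proof -
  have "(\<lambda>x. pw (1 *\<^sub>R x + - a)) integrable_on ((\<lambda>x. (1 / 1) *\<^sub>R x + - ((1 / 1) *\<^sub>R - a)) ` cbox (-(2*pi)) (2*pi))"
    using pw_int0[of "2*pi"] by (intro integrable_affinity) auto
  moreover have "((\<lambda>x. (1 / 1) *\<^sub>R x + - ((1 / 1) *\<^sub>R - a)) ` cbox (-(2*pi)) (2*pi)) = {a - 2*pi..a+2*pi}"
    by (simp add: algebra_simps)
  ultimately have "(\<lambda>t. pw (t - a)) integrable_on {a - 2*pi..2*pi+a}"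
    by simp
  then show ?thesis by (rule integrable_subinterval_real) (use assms in auto)
qed

lemma psi_int: "psi integrable_on {-pi..pi}"
  unfolding psi_def
proof -
  have "pw integrable_on {-pi..pi}" using pw_int[of 0] by simp
  moreover have "(\<lambda>t. pw (t + pi)) integrable_on {-pi..pi}" using pw_int[of "-pi"] by simp
  moreover have "(\<lambda>t. pw (t - pi)) integrable_on {-pi..pi}" using pw_int[of pi] by simp
  ultimately show "(\<lambda>t. pw t + pw (t - pi) + pw (t + pi)) integrable_on {-pi..pi}" by (intro integrable_add)
qed


definition cube :: "(real^8) set" where "cube = cbox (\<chi> i. -pi) (\<chi> i. pi)"
definition Dm :: "real^8 \<Rightarrow> real" where "Dm u = (\<Prod>i\<in>UNIV. psi (u$i))"

lemma psi_nonneg: "0 \<le> psi t" by (simp add: psi_def pw_nonneg)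

lemma psi_meas[measurable]: "psi \<in> borel_measurable borel"
  unfolding psi_def pw_def by measurable

lemma Basis8: "(Basis::(real^8) set) = (\<lambda>i. axis i 1) ` UNIV"
  by (auto simp: Basis_vec_def)

lemma prod_Basis8: "(\<Prod>b\<in>(Basis::(real^8) set). g (x \<bullet> b)) = (\<Prod>i\<in>UNIV. g (x $ i))"
  unfolding Basis8 by (subst prod.reindex) (auto simp: inj_on_def axis_eq_axis inner_axis)

lemma mem_cube: "u \<in> cube \<longleftrightarrow> (\<forall>i. -pi \<le> u$i \<and> u$i \<le> pi)"
  by (simp add: cube_def mem_box_cart)

lemma Dm_int: "Dm integrable_on cube"
proof -
  define I where "I = integral {-pi..pi} psi"
  have hI: "(psi has_integral I) {-pi..pi}" unfolding I_def by (rule integrable_integral[OF psi_int])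
  have I0: "0 \<le> I" unfolding I_def by (rule integral_nonneg[OF psi_int]) (simp add: psi_nonneg)
  have nn1: "(\<integral>\<^sup>+t. ennreal (indicator {-pi..pi} t * psi t) \<partial>lborel) = ennreal I"
    using nn_integral_has_integral_lebesgue[OF psi_nonneg hI] by simp
  have "(\<integral>\<^sup>+x. (\<Prod>b\<in>(Basis::(real^8) set). ennreal (indicator {-pi..pi} (x\<bullet>b) * psi (x\<bullet>b))) \<partial>lborel)
       = (\<Prod>b\<in>(Basis::(real^8) set). (\<integral>\<^sup>+t. ennreal (indicator {-pi..pi} t * psi t) \<partial>lborel))"
    by (rule nn_integral_lborel_prod) auto
  also have "\<dots> = ennreal (I ^ DIM(real^8))" using nn1 I0
    by (simp add: ennreal_power)
  finally have nn: "(\<integral>\<^sup>+x. ennreal (\<Prod>b\<in>(Basis::(real^8) set). indicator {-pi..pi} (x\<bullet>b) * psi (x\<bullet>b)) \<partial>lborel) = ennreal (I ^ DIM(real^8))"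
    by (subst prod_ennreal[symmetric]) (auto simp: psi_nonneg)
  have "integrable lborel (\<lambda>x::real^8. \<Prod>b\<in>Basis. indicator {-pi..pi} (x\<bullet>b) * psi (x\<bullet>b))"
    by (rule integrableI_nn_integral_finite[OF _ _ nn]) (auto intro!: prod_nonneg simp: psi_nonneg)
  then have "(\<lambda>x::real^8. \<Prod>b\<in>Basis. indicator {-pi..pi} (x\<bullet>b) * psi (x\<bullet>b)) integrable_on UNIV"
    by (rule integrable_on_lborel)
  also have "(\<lambda>x::real^8. \<Prod>b\<in>Basis. indicator {-pi..pi} (x\<bullet>b) * psi (x\<bullet>b)) = (\<lambda>x. if x \<in> cube then Dm x else 0)"
  proof
    fix x :: "real^8"
    show "(\<Prod>b\<in>Basis. indicator {-pi..pi} (x\<bullet>b) * psi (x\<bullet>b)) = (if x \<in> cube then Dm x else 0)"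
      unfolding prod_Basis8[of "\<lambda>t. indicator {-pi..pi} t * psi t"] Dm_def mem_cube
      by (auto simp: prod.distrib indicator_def)
  qed
  finally show ?thesis by (simp add: integrable_restrict_UNIV)
qed


definition SS :: "real^8 \<Rightarrow> real" where "SS u = (\<Sum>i\<in>UNIV. (sin (u$i))\<^sup>2)"
definition NN :: "(real^8) set" where "NN = {u. \<exists>i. sin (u$i) = 0}"

lemma SS_nonneg: "0 \<le> SS u" by (simp add: SS_def sum_nonneg)

lemma sin_le_SS: "(sin (u$i))\<^sup>2 \<le> SS u"
  unfolding SS_def by (rule member_le_sum) auto

lemma SS_pos: "u \<notin> NN \<Longrightarrow> 0 < SS u"
proof -
  assume "u \<notin> NN"
  then have "sin (u$0) \<noteq> 0" by (auto simp: NN_def)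
  then have "0 < (sin (u$0))\<^sup>2" by simp
  then show ?thesis using sin_le_SS[of u 0] by linarith
qed

lemma NN_closed: "closed NN"
proof -
  have eq: "NN = (\<Union>i\<in>(UNIV::8 set). {u. sin (u$i) = 0})" by (auto simp: NN_def)
  have "closed (\<Union>i\<in>(UNIV::8 set). {u::real^8. sin (u$i) = 0})"
    by (rule closed_UN) (auto intro!: closed_Collect_eq continuous_intros)
  then show ?thesis by (simp only: eq)
qed

lemma negl_cube_NN: "negligible (cube \<inter> NN)"
proof -
  have sub: "cube \<inter> NN \<subseteq> (\<Union>i\<in>UNIV. \<Union>c\<in>{-pi,0,pi}. {u::real^8. axis i 1 \<bullet> u = c})"
  proof
    fix u assume u: "u \<in> cube \<inter> NN"
    then obtain i where si: "sin (u$i) = 0" by (auto simp: NN_def)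
    then obtain k :: int where k: "u$i = of_int k * pi" by (auto simp: sin_zero_iff_int2)
    have "-pi \<le> u$i \<and> u$i \<le> pi" using u by (simp add: mem_cube)
    then have "\<bar>u$i\<bar> \<le> pi" by (simp add: abs_le_iff)
    then have "\<bar>of_int k\<bar> * pi \<le> 1 * pi" using k by (simp add: abs_mult)
    then have "\<bar>of_int k\<bar> \<le> (1::real)" using pi_gt_zero by (meson mult_le_cancel_right_pos)
    then have "k \<in> {-1,0,1}" by auto
    then have "u$i \<in> {-pi,0,pi}" using k by auto
    show "u \<in> (\<Union>i\<in>UNIV. \<Union>c\<in>{-pi,0,pi}. {u::real^8. axis i 1 \<bullet> u = c})"
    proof -
      have "axis i 1 \<bullet> u = u$i" by (simp add: inner_axis inner_commute)
      then show ?thesis using \<open>u$i \<in> {-pi,0,pi}\<close> by blast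
    qed
  qed
  have "negligible (\<Union>i\<in>UNIV. \<Union>c\<in>{-pi,0,pi}. {u::real^8. axis i 1 \<bullet> u = c})"
    by (intro negligible_Union finite_imageI finite_UN_I) (auto intro!: negligible_hyperplane simp: axis_eq_0_iff)
  then show ?thesis by (rule negligible_subset[OF _ sub])
qed

lemma one_over_sqrt_bound:
  assumes "u \<notin> NN"
  shows "1 / sqrt (SS u) \<le> (\<Prod>i\<in>UNIV. \<bar>sin (u$i)\<bar> powr (-1/8))"
proof -
  define r where "r = 1 / sqrt (SS u)"
  have S0: "0 < SS u" using SS_pos[OF assms] .
  then have r0: "0 < r" by (simp add: r_def)
  have "(\<Prod>i\<in>(UNIV::8 set). r powr (1/8)) = (r powr (1/8)) ^ 8" by simp
  also have "\<dots> = r" using r0 by (simp add: powr_realpow[symmetric] powr_powr)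
  finally have rprod: "r = (\<Prod>i\<in>(UNIV::8 set). r powr (1/8))" by simp
  have "r powr (1/8) \<le> \<bar>sin (u$i)\<bar> powr (-1/8)" for i
  proof -
    have si: "sin (u$i) \<noteq> 0" using assms by (auto simp: NN_def)
    have "\<bar>sin (u$i)\<bar> \<le> sqrt (SS u)"
      using real_sqrt_le_mono[OF sin_le_SS[of u i]] by simp
    then have "r \<le> 1 / \<bar>sin (u$i)\<bar>" unfolding r_def using si S0
      by (intro divide_left_mono) auto
    then have "r powr (1/8) \<le> (1 / \<bar>sin (u$i)\<bar>) powr (1/8)"
      using r0 by (intro powr_mono2) auto
    also have "(1 / \<bar>sin (u$i)\<bar>) powr (1/8) = \<bar>sin (u$i)\<bar> powr (-1/8)"
      by (simp add: powr_divide powr_minus_divide)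
    finally show ?thesis .
  qed
  then have "(\<Prod>i\<in>(UNIV::8 set). r powr (1/8)) \<le> (\<Prod>i\<in>UNIV. \<bar>sin (u$i)\<bar> powr (-1/8))"
    by (intro prod_mono) auto
  then show ?thesis using rprod r_def by simp
qed

lemma pointwise_bound:
  assumes "u \<in> cube" "u \<notin> NN"
  shows "\<bar>sin (u \<bullet> x) * (sin (u$j) / SS u)\<bar> \<le> Dm u"
proof -
  have S0: "0 < SS u" using SS_pos[OF assms(2)] .
  have "\<bar>sin (u \<bullet> x) * (sin (u$j) / SS u)\<bar> \<le> \<bar>sin (u$j)\<bar> / SS u"
  proof -
    have "\<bar>sin (u \<bullet> x)\<bar> * \<bar>sin (u$j)\<bar> \<le> \<bar>sin (u$j)\<bar>"
      by (rule mult_left_le_one_le) (auto simp: abs_sin_le_one)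
    then show ?thesis using S0 by (simp add: abs_mult divide_right_mono)
  qed
  also have "\<dots> \<le> sqrt (SS u) / SS u"
    using real_sqrt_le_mono[OF sin_le_SS[of u j]] S0 by (intro divide_right_mono) auto
  also have "\<dots> = 1 / sqrt (SS u)"
  proof -
    have "sqrt (SS u) * sqrt (SS u) = SS u" using S0 by simp
    then show ?thesis using S0 by (simp add: field_simps)
  qed
  also have "\<dots> \<le> (\<Prod>i\<in>UNIV. \<bar>sin (u$i)\<bar> powr (-1/8))" by (rule one_over_sqrt_bound[OF assms(2)])
  also have "\<dots> \<le> Dm u" unfolding Dm_def
  proof (intro prod_mono conjI)
    fix i
    show "0 \<le> \<bar>sin (u$i)\<bar> powr (-1/8)" by simp
    have "-pi \<le> u$i \<and> u$i \<le> pi" using assms(1) by (simp add: mem_cube)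
    then have "\<bar>u$i\<bar> \<le> pi" by (simp add: abs_le_iff)
    moreover have "sin (u$i) \<noteq> 0" using assms(2) by (auto simp: NN_def)
    ultimately show "\<bar>sin (u$i)\<bar> powr (-1/8) \<le> psi (u$i)" by (rule abs_sin_bound)
  qed
  finally show ?thesis .
qed

lemma comp_aint: "(\<lambda>u. sin (u \<bullet> x) * (sin (u$j) / SS u)) absolutely_integrable_on cube"
proof -
  define T where "T = cube - NN"
  have Tb: "T \<in> sets borel" unfolding T_def cube_def
    using NN_closed by (intro sets.Diff borel_closed) auto
  then have Tl: "T \<in> sets lebesgue" by (simp add: sets_completionI_sets)
  have sp: "negligible {u \<in> cube - T. g u \<noteq> 0}" "negligible {u \<in> T - cube. g u \<noteq> 0}" for g :: "real^8 \<Rightarrow> real"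
    by (rule negligible_subset[OF negl_cube_NN]; auto simp: T_def)+
  have "Dm absolutely_integrable_on cube"
    by (rule nonnegative_absolutely_integrable_1[OF Dm_int]) (auto simp: Dm_def psi_nonneg prod_nonneg)
  then have "Dm absolutely_integrable_on T"
    using absolutely_integrable_spike_set_eq[OF sp] by blast
  then have DmT: "Dm integrable_on T" by (rule set_lebesgue_integral_eq_integral(1))
  have cont: "continuous_on T (\<lambda>u. sin (u \<bullet> x) * (sin (u$j) / SS u))"
  proof -
    have "\<forall>u\<in>T. SS u \<noteq> 0" using SS_pos by (auto simp: T_def dest: less_imp_neq[symmetric])
    then show ?thesis unfolding SS_def by (intro continuous_intros) auto
  qed
  have "(\<lambda>u. sin (u \<bullet> x) * (sin (u$j) / SS u)) absolutely_integrable_on T"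
  proof (rule measurable_bounded_by_integrable_imp_absolutely_integrable[OF _ Tl DmT])
    show "(\<lambda>u. sin (u \<bullet> x) * (sin (u$j) / SS u)) \<in> borel_measurable (lebesgue_on T)"
      by (rule continuous_imp_measurable_on_sets_lebesgue[OF cont Tl])
    fix u assume "u \<in> T"
    then show "norm (sin (u \<bullet> x) * (sin (u$j) / SS u)) \<le> Dm u"
      using pointwise_bound by (auto simp: T_def)
  qed
  then show ?thesis using absolutely_integrable_spike_set_eq[OF sp] by blast
qed


definition ee :: "real \<Rightarrow> real \<Rightarrow> complex" where
  "ee c t = exp (\<i> * (complex_of_real t * complex_of_real c))"

lemma ee_cont: "continuous_on A (ee c)"
  unfolding ee_def by (intro continuous_intros)

lemma ee_Re: "Re (ee c t) = cos (t * c)" and ee_Im: "Im (ee c t) = sin (t * c)"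
  by (simp_all add: ee_def Re_exp Im_exp)

lemma int1d:
  assumes "c \<in> \<int>" "c \<noteq> 0"
  shows "integral\<^sup>L lborel (\<lambda>t. indicator {-pi..pi} t *\<^sub>R ee c t) = 0"
proof -
  define F where "F t = ee c t / (\<i> * complex_of_real c)" for t
  have "integral\<^sup>L lborel (\<lambda>t. indicator {-pi..pi} t *\<^sub>R ee c t) = F pi - F (-pi)"
  proof (rule integral_FTC_atLeastAtMost)
    show "-pi \<le> pi" by simp
    show "continuous_on {-pi..pi} (ee c)" by (rule ee_cont)
    fix t :: real
    have D: "((\<lambda>w. exp (\<i> * (w * complex_of_real c)) / (\<i> * complex_of_real c)) has_field_derivative
           exp (\<i> * (complex_of_real t * complex_of_real c))) (at (complex_of_real t))"
      using assms(2) by (auto intro!: derivative_eq_intros simp: field_simps)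
    have F_eq: "F = (\<lambda>x. exp (\<i> * (complex_of_real x * complex_of_real c)) / (\<i> * complex_of_real c))"
      by (simp add: F_def fun_eq_iff ee_def)
    from has_vector_derivative_real_field[OF D]
    show "(F has_vector_derivative ee c t) (at t within {-pi..pi})"
      unfolding F_eq ee_def by blast
  qed
  also have "F pi = F (-pi)"
  proof -
    obtain k :: int where k: "c = of_int k" using assms(1) by (auto elim: Ints_cases)
    have s1: "sin (pi * c) = 0" unfolding k sin_zero_iff_int2 by (intro exI[of _ k]) simp
    have s2: "sin (- pi * c) = 0" unfolding k sin_zero_iff_int2 by (intro exI[of _ "-k"]) simp
    have "ee c pi = ee c (-pi)"
      by (rule complex_eqI) (simp_all add: ee_Re ee_Im s1 s2)
    then show ?thesis by (simp add: F_def)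
  qed
  finally show ?thesis by simp
qed

lemma Tb: 
  fixes f :: "(real^8) \<Rightarrow> real"
  assumes "b \<in> Basis"
  shows "(\<Sum>b'\<in>Basis. f b' *\<^sub>R b') \<bullet> b = f b"
  using assms by (simp add: inner_sum_left inner_Basis if_distrib[of "\<lambda>x. f _ * x"] cong: if_cong)

lemma cube_exp_int0:
  fixes z :: "real^8"
  assumes zi: "\<forall>i. z$i \<in> \<int>" and z0: "z \<noteq> 0"
  shows "integral cube (\<lambda>u. exp (\<i> * complex_of_real (u \<bullet> z))) = 0"
proof -
  interpret product_sigma_finite "\<lambda>_::real^8. lborel" by standard
  define h where "h b t = indicator {-pi..pi} t *\<^sub>R ee (z \<bullet> b) t" for b :: "real^8" and t
  have hi: "integrable lborel (h b)" for b
    using borel_integrable_atLeastAtMost'[OF ee_cont[of "{-pi..pi}" "z \<bullet> b"]]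
    unfolding set_integrable_def h_def by simp
  have hm[measurable]: "h b \<in> borel_measurable borel" for b
    using hi by (simp add: borel_measurable_integrable)
  define G where "G u = (\<Prod>b\<in>(Basis::(real^8) set). h b (u \<bullet> b))" for u
  define T where "T f = (\<Sum>b\<in>(Basis::(real^8) set). f b *\<^sub>R b)" for f
  have GT: "G (T f) = (\<Prod>b\<in>Basis. h b (f b))" for f
    unfolding G_def T_def by (intro prod.cong refl) (simp add: Tb)
  have Tm[measurable]: "T \<in> measurable (Pi\<^sub>M Basis (\<lambda>_. lborel)) borel"
    unfolding T_def by measurable
  have Gm[measurable]: "G \<in> borel_measurable borel"
    unfolding G_def by measurable
  have lb: "lborel = distr (Pi\<^sub>M Basis (\<lambda>_. lborel)) borel T"
    unfolding T_def by (rule lborel_eq)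
  have Gint: "integrable lborel G"
    unfolding lb integrable_distr_eq[OF Tm Gm] GT
    by (rule product_integrable_prod) (auto intro: hi)
  obtain i where zi0: "z$i \<noteq> 0" using z0 by (auto simp: vec_eq_iff)
  have b0: "axis i 1 \<in> (Basis::(real^8) set)" by (simp add: Basis_vec_def) blast
  have zb0: "z \<bullet> axis i 1 = z$i" by (simp add: inner_axis)
  have "integral\<^sup>L lborel G = integral\<^sup>L (Pi\<^sub>M Basis (\<lambda>_. lborel)) (\<lambda>f. \<Prod>b\<in>Basis. h b (f b))"
    unfolding lb integral_distr[OF Tm Gm] GT ..
  also have "\<dots> = (\<Prod>b\<in>Basis. integral\<^sup>L lborel (h b))"
    by (rule product_integral_prod) (auto intro: hi)
  also have "\<dots> = 0"
  proof (rule prod_zero)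
    show "\<exists>b\<in>Basis. integral\<^sup>L lborel (h b) = 0"
    proof (intro bexI[of _ "axis i 1"] b0)
      have "h (axis i 1) = (\<lambda>t. indicator {-pi..pi} t *\<^sub>R ee (z$i) t)"
        by (simp add: fun_eq_iff h_def zb0)
      then show "integral\<^sup>L lborel (h (axis i 1)) = 0" using int1d[of "z$i"] zi zi0 by simp
    qed
  qed simp
  finally have G0: "integral\<^sup>L lborel G = 0" .
  have Geq: "G = (\<lambda>u. if u \<in> cube then exp (\<i> * complex_of_real (u \<bullet> z)) else 0)"
  proof
    fix u :: "real^8"
    have "G u = (\<Prod>b\<in>Basis. complex_of_real (indicator {-pi..pi} (u \<bullet> b))) * (\<Prod>b\<in>(Basis::(real^8) set). ee (z \<bullet> b) (u \<bullet> b))"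
      unfolding G_def h_def by (simp add: prod.distrib scaleR_conv_of_real)
    also have "(\<Prod>b\<in>Basis. complex_of_real (indicator {-pi..pi} (u \<bullet> b))) = (if u \<in> cube then 1 else 0)"
      unfolding prod_Basis8[of "\<lambda>t. complex_of_real (indicator {-pi..pi} t)"] mem_cube
      by (auto simp: indicator_def)
    also have "(\<Prod>b\<in>(Basis::(real^8) set). ee (z \<bullet> b) (u \<bullet> b)) = exp (\<i> * complex_of_real (u \<bullet> z))"
    proof -
      have "(\<Prod>b\<in>(Basis::(real^8) set). ee (z \<bullet> b) (u \<bullet> b)) = exp (\<Sum>b\<in>(Basis::(real^8) set). \<i> * (complex_of_real (u \<bullet> b) * complex_of_real (z \<bullet> b)))"
        by (simp add: exp_sum ee_def)
      also have "(\<Sum>b\<in>(Basis::(real^8) set). \<i> * (complex_of_real (u \<bullet> b) * complex_of_real (z \<bullet> b))) = \<i> * complex_of_real (u \<bullet> z)"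
        by (simp add: euclidean_inner[of u z] sum_distrib_left)
      finally show ?thesis .
    qed
    finally show "G u = (if u \<in> cube then exp (\<i> * complex_of_real (u \<bullet> z)) else 0)" by simp
  qed
  have "integral UNIV G = integral\<^sup>L lborel G" by (rule integral_lborel[OF Gint])
  then show ?thesis using G0 unfolding Geq integral_restrict_UNIV by simp
qed

lemma cube_cos_int0:
  fixes z :: "real^8"
  assumes "\<forall>i. z$i \<in> \<int>" "z \<noteq> 0"
  shows "integral cube (\<lambda>u. cos (u \<bullet> z)) = 0"
proof -
  have "(\<lambda>u. exp (\<i> * complex_of_real (u \<bullet> z))) integrable_on cube"
    unfolding cube_def by (intro integrable_continuous continuous_intros)
  then have "((\<lambda>u. exp (\<i> * complex_of_real (u \<bullet> z))) has_integral 0) cube"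
    using cube_exp_int0[OF assms] by (metis integrable_integral)
  from has_integral_Re[OF this] have "((\<lambda>u. cos (u \<bullet> z)) has_integral 0) cube"
    by (simp add: Re_exp)
  then show ?thesis by (rule integral_unique)
qed


lemma sum_ix: "(\<Sum>l<8. g (ix l)) = (\<Sum>i\<in>UNIV. g i)"
proof -
  have "inj_on ix {..<8}" using ix_inj by (auto simp: inj_on_def)
  then show ?thesis by (simp add: UNIV8 sum.reindex)
qed

lemma omul_add_left: "omul (a + b) c = omul a c + omul b c"
  unfolding omul_def by (simp add: distrib_right scaleR_add_left sum.distrib)
lemma omul_add_right: "omul a (b + c) = omul a b + omul a c"
  unfolding omul_def by (simp add: distrib_left scaleR_add_left sum.distrib)
lemma omul_scaleR_left: "omul (r *\<^sub>R a) c = r *\<^sub>R omul a c"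
  unfolding omul_def by (simp add: scaleR_sum_right mult.assoc)
lemma omul_scaleR_right: "omul a (r *\<^sub>R c) = r *\<^sub>R omul a c"
  unfolding omul_def by (simp add: scaleR_sum_right mult.assoc mult.left_commute)
lemma omul_zero_left: "omul 0 c = 0"
  using omul_scaleR_left[of 0 a c for a] by simp
lemma omul_zero_right: "omul a 0 = 0"
  using omul_scaleR_right[of a 0 c for c] by simp
lemma omul_diff_left: "omul (a - b) c = omul a c - omul b c"
  using omul_add_left[of a "-b" c] omul_scaleR_left[of "-1" b c] by simp
lemma omul_diff_right: "omul a (b - c) = omul a b - omul a c"
  using omul_add_right[of a b "-c"] omul_scaleR_right[of a "-1" c] by simp
lemma omul_sum_left: "omul (\<Sum>i\<in>A. f i) c = (\<Sum>i\<in>A. omul (f i) c)"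
  by (induction A rule: infinite_finite_induct) (simp_all add: omul_add_left omul_zero_left)
lemma omul_sum_right: "omul c (\<Sum>i\<in>A. f i) = (\<Sum>i\<in>A. omul c (f i))"
  by (induction A rule: infinite_finite_induct) (simp_all add: omul_add_right omul_zero_right)

lemma bl_L: "bounded_linear (\<lambda>v. omul a (omul v w))"
proof -
  have "linear (\<lambda>v. omul a (omul v w))"
    by (rule linearI) (simp_all add: omul_add_left omul_add_right omul_scaleR_left omul_scaleR_right)
  then show ?thesis by (simp add: linear_conv_bounded_linear)
qed

definition QQ :: "real^8 \<Rightarrow> real^8" where "QQ u = (\<Sum>l<8. sin (u $ ix l) *\<^sub>R ebar l)"
definition FF :: "real^8 \<Rightarrow> real^8 \<Rightarrow> real^8" where
  "FF x u = (sin (u \<bullet> x) / (\<Sum>l<8. (sin (u $ ix l))\<^sup>2)) *\<^sub>R (\<Sum>l<8. sin (u $ ix l) *\<^sub>R ebar l)"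

lemma SS_ix: "(\<Sum>l<8. (sin (u $ ix l))\<^sup>2) = SS u"
  unfolding SS_def by (rule sum_ix)

lemma E1_FF: "E1 x = (1 / (2 * pi) ^ 8) *\<^sub>R integral cube (FF x)"
  unfolding E1_def FF_def cube_def ..

lemma FF_int: "FF x integrable_on cube"
proof -
  have eq: "FF x = (\<lambda>u. \<Sum>l<8. (sin (u \<bullet> x) * (sin (u $ ix l) / SS u)) *\<^sub>R ebar l)"
    by (simp add: fun_eq_iff FF_def SS_ix scaleR_sum_right)
  show ?thesis unfolding eq
    by (intro Henstock_Kurzweil_Integration.integrable_sum finite_lessThan integrable_on_scaleR_left
          set_lebesgue_integral_eq_integral(1) comp_aint)
qed

lemma ev_inner: "u \<bullet> ev k = u $ ix k"
  by (simp add: ev_def inner_axis)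

definition GG :: "real^8 \<Rightarrow> nat \<Rightarrow> real^8 \<Rightarrow> real^8" where
  "GG z k u = (2 * cos (u \<bullet> z) * (sin (u $ ix k) / SS u)) *\<^sub>R QQ u"

lemma FF_diff: "FF (z + ev k) u - FF (z - ev k) u = GG z k u"
proof -
  have e1: "sin (u \<bullet> (z + ev k)) - sin (u \<bullet> (z - ev k)) = 2 * cos (u \<bullet> z) * sin (u $ ix k)"
    by (simp add: inner_add_right inner_diff_right ev_inner sin_add sin_diff)
  have "sin (u \<bullet> (z + ev k)) / SS u - sin (u \<bullet> (z - ev k)) / SS u = (sin (u \<bullet> (z + ev k)) - sin (u \<bullet> (z - ev k))) / SS u"
    by (rule diff_divide_distrib[symmetric])
  also have "\<dots> = 2 * cos (u \<bullet> z) * (sin (u $ ix k) / SS u)"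
    unfolding e1 by simp
  finally have e2: "sin (u \<bullet> (z + ev k)) / SS u - sin (u \<bullet> (z - ev k)) / SS u = 2 * cos (u \<bullet> z) * (sin (u $ ix k) / SS u)" .
  have "FF (z + ev k) u - FF (z - ev k) u = (sin (u \<bullet> (z + ev k)) / SS u - sin (u \<bullet> (z - ev k)) / SS u) *\<^sub>R QQ u"
    unfolding FF_def QQ_def SS_ix by (rule scaleR_left_diff_distrib[symmetric])
  then show ?thesis unfolding e2 GG_def .
qed

lemma GG_int: "GG z k integrable_on cube"
proof -
  have "(\<lambda>u. FF (z + ev k) u - FF (z - ev k) u) integrable_on cube"
    by (intro Henstock_Kurzweil_Integration.integrable_diff FF_int)
  then show ?thesis by (simp add: FF_diff[abs_def])
qed

lemma E1_diff: "E1 (z + ev k) - E1 (z - ev k) = (1 / (2 * pi) ^ 8) *\<^sub>R integral cube (GG z k)"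
proof -
  have "E1 (z + ev k) - E1 (z - ev k) = (1 / (2 * pi) ^ 8) *\<^sub>R (integral cube (FF (z + ev k)) - integral cube (FF (z - ev k)))"
    unfolding E1_FF by (simp add: scaleR_diff_right)
  also have "integral cube (FF (z + ev k)) - integral cube (FF (z - ev k)) = integral cube (\<lambda>u. FF (z + ev k) u - FF (z - ev k) u)"
    by (rule Henstock_Kurzweil_Integration.integral_diff[symmetric]) (rule FF_int)+
  also have "\<dots> = integral cube (GG z k)" by (simp add: FF_diff[abs_def])
  finally show ?thesis .
qed

lemma GG_point: "(\<Sum>k<8. omul (ev k) (omul (GG z k u) w)) = (2 * cos (u \<bullet> z) * (SS u / SS u)) *\<^sub>R w"
proof -
  define \<alpha> where "\<alpha> = 2 * cos (u \<bullet> z) / SS u"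
  have "(\<Sum>k<8. omul (ev k) (omul (GG z k u) w)) = (\<Sum>k<8. \<alpha> *\<^sub>R omul (sin (u $ ix k) *\<^sub>R ev k) (omul (QQ u) w))"
    unfolding GG_def \<alpha>_def by (intro sum.cong refl) (simp add: omul_scaleR_left omul_scaleR_right)
  also have "\<dots> = \<alpha> *\<^sub>R omul (\<Sum>k<8. sin (u $ ix k) *\<^sub>R ev k) (omul (QQ u) w)"
    by (simp add: omul_sum_left scaleR_sum_right)
  also have "\<dots> = \<alpha> *\<^sub>R ((\<Sum>l<8. (sin (u $ ix l))\<^sup>2) *\<^sub>R w)"
    unfolding QQ_def using key_oct[of "\<lambda>l. sin (u $ ix l)" w] by simp
  also have "\<dots> = (2 * cos (u \<bullet> z) * (SS u / SS u)) *\<^sub>R w"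
    by (simp add: SS_ix \<alpha>_def)
  finally show ?thesis .
qed

lemma DE1_zero:
  assumes zi: "\<forall>i. z$i \<in> \<int>" and z0: "z \<noteq> 0"
  shows "(\<Sum>k<8. omul (ev k) (omul (E1 (z + ev k) - E1 (z - ev k)) w)) = 0"
proof -
  define c where "c = 1 / (2 * pi) ^ 8"
  have "(\<Sum>k<8. omul (ev k) (omul (E1 (z + ev k) - E1 (z - ev k)) w))
      = (\<Sum>k<8. c *\<^sub>R integral cube (\<lambda>u. omul (ev k) (omul (GG z k u) w)))"
  proof (intro sum.cong refl)
    fix k
    have "omul (ev k) (omul (integral cube (GG z k)) w) = integral cube ((\<lambda>v. omul (ev k) (omul v w)) \<circ> GG z k)"
      by (rule integral_linear[OF GG_int bl_L, symmetric])
    then show "omul (ev k) (omul (E1 (z + ev k) - E1 (z - ev k)) w) = c *\<^sub>R integral cube (\<lambda>u. omul (ev k) (omul (GG z k u) w))"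
      unfolding E1_diff c_def by (simp add: omul_scaleR_left omul_scaleR_right o_def)
  qed
  also have "\<dots> = c *\<^sub>R integral cube (\<lambda>u. \<Sum>k<8. omul (ev k) (omul (GG z k u) w))"
  proof -
    have "integral cube (\<lambda>u. \<Sum>k<8. omul (ev k) (omul (GG z k u) w)) = (\<Sum>k<8. integral cube (\<lambda>u. omul (ev k) (omul (GG z k u) w)))"
    proof (rule Henstock_Kurzweil_Integration.integral_sum)
      fix k
      show "(\<lambda>u. omul (ev k) (omul (GG z k u) w)) integrable_on cube"
        using integrable_linear[OF GG_int bl_L] by (simp add: o_def)
    qed simp
    then show ?thesis by (simp add: scaleR_sum_right)
  qed
  also have "integral cube (\<lambda>u. \<Sum>k<8. omul (ev k) (omul (GG z k u) w)) = integral cube (\<lambda>u. (2 * cos (u \<bullet> z) * (SS u / SS u)) *\<^sub>R w)"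
    by (simp add: GG_point)
  also have "\<dots> = integral cube (\<lambda>u. (2 * cos (u \<bullet> z)) *\<^sub>R w)"
  proof (rule integral_spike[OF negl_cube_NN])
    fix u assume "u \<in> cube - cube \<inter> NN"
    then have "SS u \<noteq> 0" using SS_pos by force
    then show "(2 * cos (u \<bullet> z)) *\<^sub>R w = (2 * cos (u \<bullet> z) * (SS u / SS u)) *\<^sub>R w" by simp
  qed
  also have "\<dots> = integral cube (\<lambda>u. 2 * cos (u \<bullet> z)) *\<^sub>R w"
  proof -
    have "(\<lambda>u. 2 * cos (u \<bullet> z)) integrable_on cube"
      unfolding cube_def by (intro integrable_continuous continuous_intros)
    from integral_linear[OF this bounded_linear_scaleR_left[of w]] show ?thesis by (simp add: o_def)
  qed
  also have "integral cube (\<lambda>u. 2 * cos (u \<bullet> z)) = 0"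
    using cube_cos_int0[OF zi z0] by simp
  finally show ?thesis by simp
qed


lemma Zh_add: "x \<in> Zh h \<Longrightarrow> y \<in> Zh h \<Longrightarrow> x + y \<in> Zh h"
  unfolding Zh_def
proof (clarify)
  fix i assume "\<forall>i. \<exists>k::int. x $ i = h * of_int k" "\<forall>i. \<exists>k::int. y $ i = h * of_int k"
  then obtain a b :: int where "x$i = h * of_int a" "y$i = h * of_int b" by blast
  then show "\<exists>k::int. (x + y) $ i = h * of_int k" by (intro exI[of _ "a + b"]) (simp add: distrib_left)
qed

lemma Zh_uminus: "x \<in> Zh h \<Longrightarrow> - x \<in> Zh h"
  unfolding Zh_def
proof (clarify)
  fix i assume "\<forall>i. \<exists>k::int. x $ i = h * of_int k"
  then obtain a :: int where "x$i = h * of_int a" by blast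
  then show "\<exists>k::int. (- x) $ i = h * of_int k" by (intro exI[of _ "- a"]) simp
qed

lemma Zh_diff: "x \<in> Zh h \<Longrightarrow> y \<in> Zh h \<Longrightarrow> x - y \<in> Zh h"
  using Zh_add[of x h "- y"] Zh_uminus[of y h] by simp

lemma Zh_ev: "h *\<^sub>R ev l \<in> Zh h"
  unfolding Zh_def
proof (clarify)
  fix i
  show "\<exists>k::int. (h *\<^sub>R ev l) $ i = h * of_int k"
    by (cases "i = ix l") (auto simp: ev_def axis_def intro: exI[of _ 1] exI[of _ 0])
qed

lemma Zh_int: assumes "x \<in> Zh h" "h > 0" shows "\<forall>i. ((1/h) *\<^sub>R x) $ i \<in> \<int>"
proof
  fix i
  obtain a :: int where "x$i = h * of_int a" using assms(1) by (auto simp: Zh_def)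
  then show "((1/h) *\<^sub>R x) $ i \<in> \<int>" using assms(2) by simp
qed

lemma dcent_eq: "dcent l h F y = (1 / (2 * h)) *\<^sub>R (F (y + h *\<^sub>R ev l) - F (y - h *\<^sub>R ev l))"
proof -
  have "(1/h) *\<^sub>R (F (y + h *\<^sub>R ev l) - F y) + (1/h) *\<^sub>R (F y - F (y - h *\<^sub>R ev l))
      = (1/h) *\<^sub>R (F (y + h *\<^sub>R ev l) - F (y - h *\<^sub>R ev l))"
    by (simp add: scaleR_add_right[symmetric])
  then show ?thesis unfolding dcent_def dplus_def dminus_def by simp
qed

lemma Dh_eq: "Dh h F y = (\<Sum>k<8. (1 / (2 * h)) *\<^sub>R omul (ev k) (F (y + h *\<^sub>R ev k) - F (y - h *\<^sub>R ev k)))"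
  unfolding Dh_def dcent_eq by (simp add: omul_scaleR_right)

lemma Dh_sum: "Dh h (\<lambda>y. \<Sum>i\<in>S. F i y) y = (\<Sum>i\<in>S. Dh h (F i) y)"
  unfolding Dh_eq
  by (simp add: sum_subtractf[symmetric] omul_sum_right scaleR_sum_right sum.swap[of _ "{..<8::nat}"] omul_diff_right)

lemma Dh_scale: "Dh h (\<lambda>y. c *\<^sub>R F y) y = c *\<^sub>R Dh h F y"
  unfolding Dh_eq
  by (simp add: scaleR_diff_right[symmetric] omul_scaleR_right scaleR_sum_right)

lemma Dh_add: "Dh h (\<lambda>y. F y + G y) y = Dh h F y + Dh h G y"
  unfolding Dh_eq sum.distrib[symmetric]
  by (intro sum.cong refl) (simp add: omul_add_right omul_diff_right algebra_simps)

lemma DEh: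
  assumes h: "h > 0" and Z: "p + y \<in> Zh h" and nz: "p + y \<noteq> 0"
  shows "Dh h (\<lambda>y. omul (Eh h (p + y)) w) y = 0"
proof -
  define z where "z = (1/h) *\<^sub>R (p + y)"
  have zi: "\<forall>i. z$i \<in> \<int>" unfolding z_def by (rule Zh_int[OF Z h])
  have z0: "z \<noteq> 0" using nz h by (simp add: z_def)
  have e1: "(1/h) *\<^sub>R (p + (y + h *\<^sub>R ev k)) = z + ev k" for k
    using h by (simp add: z_def algebra_simps)
  have e2: "(1/h) *\<^sub>R (p + (y - h *\<^sub>R ev k)) = z - ev k" for k
    using h by (simp add: z_def algebra_simps)
  have "Dh h (\<lambda>y. omul (Eh h (p + y)) w) y
     = (\<Sum>k<8. ((1 / (2 * h)) * (1 / h ^ 7)) *\<^sub>R omul (ev k) (omul (E1 (z + ev k) - E1 (z - ev k)) w))"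
    unfolding Dh_eq Eh_def e1 e2
    by (simp add: omul_diff_left omul_scaleR_left omul_scaleR_right omul_diff_right scaleR_diff_right)
  also have "\<dots> = ((1 / (2 * h)) * (1 / h ^ 7)) *\<^sub>R (\<Sum>k<8. omul (ev k) (omul (E1 (z + ev k) - E1 (z - ev k)) w))"
    by (simp add: scaleR_sum_right)
  also have "\<dots> = 0" using DE1_zero[OF zi z0] by simp
  finally show ?thesis .
qed

lemma nbhd_plus: "l < 8 \<Longrightarrow> y + h *\<^sub>R ev l \<in> nbhd h y"
  unfolding nbhd_def by blast
lemma nbhd_minus: "l < 8 \<Longrightarrow> y - h *\<^sub>R ev l \<in> nbhd h y"
  unfolding nbhd_def by blast
lemma nbhd_self: "y \<in> nbhd h y"
  unfolding nbhd_def by blast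

lemma in_bdry: "y \<in> Zh h \<Longrightarrow> a \<in> nbhd h y \<Longrightarrow> b \<in> nbhd h y \<Longrightarrow> a \<in> B \<Longrightarrow> b \<in> Zh h - B \<Longrightarrow> y \<in> bdry h B"
  unfolding bdry_def by blast

lemma bdry_sym: "B \<subseteq> Zh h \<Longrightarrow> bdry h (Zh h - B) = bdry h B"
proof -
  assume "B \<subseteq> Zh h"
  then have "Zh h - (Zh h - B) = B" by blast
  then show ?thesis unfolding bdry_def by blast
qed

lemma coef_minus:
  assumes xZ: "x \<in> Zh h" and yZ: "y \<in> Zh h" and yb: "y \<notin> bdry h B" and BZ: "B \<subseteq> Zh h"
    and l: "l < 8" and n: "nminus h B l x \<noteq> 0"
  shows "h *\<^sub>R ev l - x + y \<noteq> 0"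
proof
  assume "h *\<^sub>R ev l - x + y = 0"
  then have yx: "y = x - h *\<^sub>R ev l" by (simp add: algebra_simps)
  then have xy: "x = y + h *\<^sub>R ev l" by simp
  have "indicator B x \<noteq> (indicator B (x - h *\<^sub>R ev l) :: real)"
    using n by (auto simp: nminus_def dminus_def)
  then have "(x \<in> B \<and> y \<notin> B) \<or> (x \<notin> B \<and> y \<in> B)" unfolding yx by (auto simp: indicator_def split: if_splits)
  then have "y \<in> bdry h B"
    using in_bdry[OF yZ, of x y B] in_bdry[OF yZ, of y x B] xZ yZ nbhd_self[of y h] nbhd_plus[OF l, of y h] xy by blast
  then show False using yb by simp
qed

lemma coef_plus:
  assumes xZ: "x \<in> Zh h" and yZ: "y \<in> Zh h" and yb: "y \<notin> bdry h B" and BZ: "B \<subseteq> Zh h"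
    and l: "l < 8" and n: "nplus h B l x \<noteq> 0"
  shows "- (h *\<^sub>R ev l) - x + y \<noteq> 0"
proof
  assume "- (h *\<^sub>R ev l) - x + y = 0"
  then have yx: "y = x + h *\<^sub>R ev l" by (simp add: algebra_simps)
  then have xy: "x = y - h *\<^sub>R ev l" by simp
  have "indicator B (x + h *\<^sub>R ev l) \<noteq> (indicator B x :: real)"
    using n by (auto simp: nplus_def dplus_def)
  then have "(x \<in> B \<and> y \<notin> B) \<or> (x \<notin> B \<and> y \<in> B)" unfolding yx by (auto simp: indicator_def split: if_splits)
  then have "y \<in> bdry h B"
    using in_bdry[OF yZ, of x y B] in_bdry[OF yZ, of y x B] xZ yZ nbhd_self[of y h] nbhd_minus[OF l, of y h] xy by blast
  then show False using yb by simp
qed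

lemma Ch_eq: "Ch h B f = (\<lambda>y. \<Sum>x\<in>bdry h B. \<Sum>l<8.
      (sarea h B x * (- 1 / 2 * nminus h B l x)) *\<^sub>R omul (Eh h (h *\<^sub>R ev l - x + y)) (omul (ev l) (f x))
    + (sarea h B x * (- 1 / 2 * nplus h B l x)) *\<^sub>R omul (Eh h (- (h *\<^sub>R ev l) - x + y)) (omul (ev l) (f x)))"
  unfolding Ch_def Kstar_def
  by (simp only: scaleR_sum_right omul_add_left omul_scaleR_left scaleR_add_right scaleR_scaleR)

lemma part1:
  assumes h: "h > 0" and BZ: "B \<subseteq> Zh h" and y: "y \<in> interior_h h B \<union> interior_h h (Zh h - B)"
  shows "Dh h (Ch h B f) y = 0"
proof -
  have yZ: "y \<in> Zh h" using y BZ by (auto simp: interior_h_def)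
  have yb: "y \<notin> bdry h B" using y bdry_sym[OF BZ] by (auto simp: interior_h_def)
  have "Dh h (Ch h B f) y = (\<Sum>x\<in>bdry h B. \<Sum>l<8.
      (sarea h B x * (- 1 / 2 * nminus h B l x)) *\<^sub>R Dh h (\<lambda>y. omul (Eh h (h *\<^sub>R ev l - x + y)) (omul (ev l) (f x))) y
    + (sarea h B x * (- 1 / 2 * nplus h B l x)) *\<^sub>R Dh h (\<lambda>y. omul (Eh h (- (h *\<^sub>R ev l) - x + y)) (omul (ev l) (f x))) y)"
    unfolding Ch_eq by (simp only: Dh_sum Dh_add Dh_scale)
  also have "\<dots> = 0"
  proof (intro sum.neutral ballI)
    fix x l assume x: "x \<in> bdry h B" and l: "l \<in> {..<8::nat}"
    have xZ: "x \<in> Zh h" using x by (simp add: bdry_def)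
    have t1: "nminus h B l x *\<^sub>R Dh h (\<lambda>y. omul (Eh h (h *\<^sub>R ev l - x + y)) (omul (ev l) (f x))) y = 0"
    proof (cases "nminus h B l x = 0")
      case False
      have "Dh h (\<lambda>y. omul (Eh h (h *\<^sub>R ev l - x + y)) (omul (ev l) (f x))) y = 0"
        by (rule DEh[OF h]) (use Zh_add[OF Zh_diff[OF Zh_ev xZ] yZ] coef_minus[OF xZ yZ yb BZ _ False] l in auto)
      then show ?thesis by simp
    qed simp
    have t2: "nplus h B l x *\<^sub>R Dh h (\<lambda>y. omul (Eh h (- (h *\<^sub>R ev l) - x + y)) (omul (ev l) (f x))) y = 0"
    proof (cases "nplus h B l x = 0")
      case False
      have "Dh h (\<lambda>y. omul (Eh h (- (h *\<^sub>R ev l) - x + y)) (omul (ev l) (f x))) y = 0"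
        by (rule DEh[OF h]) (use Zh_add[OF Zh_diff[OF Zh_uminus[OF Zh_ev] xZ] yZ] coef_plus[OF xZ yZ yb BZ _ False] l in auto)
      then show ?thesis by simp
    qed simp
    show "(sarea h B x * (- 1 / 2 * nminus h B l x)) *\<^sub>R Dh h (\<lambda>y. omul (Eh h (h *\<^sub>R ev l - x + y)) (omul (ev l) (f x))) y
    + (sarea h B x * (- 1 / 2 * nplus h B l x)) *\<^sub>R Dh h (\<lambda>y. omul (Eh h (- (h *\<^sub>R ev l) - x + y)) (omul (ev l) (f x))) y = 0"
      by (simp only: scaleR_scaleR[symmetric] t1 t2 scaleR_zero_right add_0)
  qed
  finally show ?thesis .
qed

theorem mainTheorem8:
  fixes h :: real and B :: "pt set" and f :: "pt \<Rightarrow> oct"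
  assumes "h > 0" and "B \<subseteq> Zh h" and "bounded B"
  shows "(\<forall>y \<in> interior_h h B \<union> interior_h h (Zh h - B). Dh h (Ch h B f) y = 0)
       \<and> ((\<forall>y \<in> B. f y = Ch h B f y) \<longrightarrow> (\<forall>y \<in> interior_h h B. Dh h f y = 0))"
proof (intro conjI ballI impI)
  fix y assume "y \<in> interior_h h B \<union> interior_h h (Zh h - B)"
  then show "Dh h (Ch h B f) y = 0" by (rule part1[OF assms(1,2)])
next
  fix y assume fC: "\<forall>y\<in>B. f y = Ch h B f y" and y: "y \<in> interior_h h B"
  have yB: "y \<in> B" and yb: "y \<notin> bdry h B" using y by (auto simp: interior_h_def)
  have yZ: "y \<in> Zh h" using yB assms(2) by blast
  have nb: "a \<in> B" if "a \<in> nbhd h y" for a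
  proof (rule ccontr)
    assume "a \<notin> B"
    have "a \<in> Zh h"
      using that yZ Zh_add[OF yZ Zh_ev] Zh_diff[OF yZ Zh_ev] unfolding nbhd_def by blast
    then have "y \<in> bdry h B" using in_bdry[OF yZ nbhd_self that yB] \<open>a \<notin> B\<close> by blast
    then show False using yb by simp
  qed
  have "Dh h f y = Dh h (Ch h B f) y"
    unfolding Dh_eq
  proof (intro sum.cong refl)
    fix k :: nat assume "k \<in> {..<8}"
    then have "y + h *\<^sub>R ev k \<in> B" "y - h *\<^sub>R ev k \<in> B"
      using nb nbhd_plus nbhd_minus by auto
    then show "(1 / (2 * h)) *\<^sub>R omul (ev k) (f (y + h *\<^sub>R ev k) - f (y - h *\<^sub>R ev k)) =
               (1 / (2 * h)) *\<^sub>R omul (ev k) (Ch h B f (y + h *\<^sub>R ev k) - Ch h B f (y - h *\<^sub>R ev k))"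
      using fC by simp
  qed
  also have "\<dots> = 0" using y by (intro part1[OF assms(1,2)]) simp
  finally show "Dh h f y = 0" .
qed


end
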